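(* Assume $\sigma_1(x)=\tfrac12\sigma_1''(0)(x-a_1)(x-b_1)$ and $\sigma_2(x)=\tfrac12\sigma_2''(0)(x-a_2)(x-b_2)$ with $\sigma_1''(0)\neq0$, $\sigma_2''(0)\neq0$ and real zeros satisfying $a_1<0<b_1<a_2\le b_2$, and assume $q^2\Lambda_q<0$, where $\Lambda_q=q^{-2}\Big[1+\frac{(1-q^{-1})\tau'(0)}{\frac12\sigma_1''(0)}\Big]$. Put $a=a_1$, $b=b_1$ and $$\rho(x)=\frac{(qx/a,\,qx/b;q)_\infty}{(x/a_2,\,x/b_2;q)_\infty}.$$ Then there exist polynomials $P_n$, $n\in\mathbb{N}_0$, with $P_n$ of degree $n$ a solution of the q-EHT with $\lambda=\lambda_n$, and nonzero constants $d_n^2$, such that for all $m,n\in\mathbb{N}_0$ $$\int_a^b P_n(x)P_m(x)\rho(x)\,d_qx=d_n^2\delta_{mn},$$ i.e. the $P_n$ are orthogonal with respect to $\rho$ supported on $\{q^ka\}_{k\in\mathbb{N}_0}\cup\{q^kb\}_{k\in\mathbb{N}_0}$.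
   Context: Throughout $0<q<1$. For a function $y$ and $\zeta\in\{q,q^{-1}\}$, $D_\zeta y(x)=\frac{y(x)-y(\zeta x)}{(1-\zeta)x}$ for $x\ne0$ and $D_\zeta y(0)=y'(0)$; $[n]_q=\frac{1-q^n}{1-q}$. Let $\sigma_1$ be a real polynomial of degree at most two, $\tau(x)=\tau'(0)x+\tau(0)$ a real polynomial with $\tau'(0)\ne0$, and $\sigma_2(x):=q[\sigma_1(x)+(1-q^{-1})x\tau(x)]$. The q-EHT with parameter $n\in\mathbb{N}_0$ is $\sigma_1(x)D_{q^{-1}}D_qy(x)+\tau(x)D_qy(x)+\lambda_ny(x)=0$, where $\lambda_n=-[n]_q\big(\tau'(0)+\tfrac12[n-1]_{q^{-1}}\sigma_1''(0)\big)$. Notation: $(\alpha;q)_\infty=\prod_{k\ge0}(1-\alpha q^k)$ and $(\alpha_1,\dots,\alpha_r;q)_\infty=\prod_{i}(\alpha_i;q)_\infty$. For $a<0<b$ the $q$-Jackson integral is $\int_a^b f(x)\,d_qx=(1-q)b\sum_{j\ge0}q^jf(q^jb)+(1-q)(-a)\sum_{j\ge0}q^jf(q^ja)$. *)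

theory Defs
  imports "HOL-Analysis.Analysis" "HOL-Computational_Algebra.Polynomial"
begin

definition qD :: "real \<Rightarrow> (real \<Rightarrow> real) \<Rightarrow> real \<Rightarrow> real" where
  "qD \<zeta> y x = (if x = 0 then deriv y 0 else (y x - y (\<zeta> * x)) / ((1 - \<zeta>) * x))"

definition qnum :: "real \<Rightarrow> nat \<Rightarrow> real" where
  "qnum q n = (1 - q ^ n) / (1 - q)"

definition qpoch_inf :: "real \<Rightarrow> real \<Rightarrow> real" where
  "qpoch_inf \<alpha> q = (\<Prod>k. 1 - \<alpha> * q ^ k)"

definition jackson_int :: "real \<Rightarrow> real \<Rightarrow> real \<Rightarrow> (real \<Rightarrow> real) \<Rightarrow> real" where
  "jackson_int q a b f =
     (1 - q) * b * (\<Sum>j. q ^ j * f (q ^ j * b)) + (1 - q) * (- a) * (\<Sum>j. q ^ j * f (q ^ j * a))"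

definition dd0 :: "real poly \<Rightarrow> real" where
  "dd0 p = poly (pderiv (pderiv p)) 0"

definition sigma2 :: "real \<Rightarrow> real poly \<Rightarrow> real poly \<Rightarrow> real poly" where
  "sigma2 q \<sigma>1 \<tau> = smult q (\<sigma>1 + smult (1 - 1/q) ([:0, 1:] * \<tau>))"

definition qEHT_lambda :: "real \<Rightarrow> real poly \<Rightarrow> real poly \<Rightarrow> nat \<Rightarrow> real" where
  "qEHT_lambda q \<sigma>1 \<tau> n =
     - qnum q n * (poly (pderiv \<tau>) 0 + (1/2) * qnum (1/q) (n - 1) * dd0 \<sigma>1)"

definition solves_qEHT :: "real \<Rightarrow> real poly \<Rightarrow> real poly \<Rightarrow> real \<Rightarrow> (real \<Rightarrow> real) \<Rightarrow> bool" where
  "solves_qEHT q \<sigma>1 \<tau> lam y \<longleftrightarrow>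
     (\<forall>x. poly \<sigma>1 x * qD (1/q) (qD q y) x + poly \<tau> x * qD q y x + lam * y x = 0)"

end

theory Submission
  imports Defs
begin


definition Dqp :: "real \<Rightarrow> real poly \<Rightarrow> real poly" where
  "Dqp q p = (\<Sum>k<degree p. monom (coeff p (Suc k) * qnum q (Suc k)) k)"

lemma coeff_Dqp: "coeff (Dqp q p) j = coeff p (Suc j) * qnum q (Suc j)"
proof (cases "j < degree p")
  case True thus ?thesis by (simp add: Dqp_def coeff_sum coeff_monom)
next
  case False
  hence "coeff p (Suc j) = 0" by (intro coeff_eq_0) simp
  thus ?thesis using False by (simp add: Dqp_def coeff_sum coeff_monom)
qed

lemma poly_Dqp0: "q \<noteq> 1 \<Longrightarrow> poly (Dqp q p) 0 = coeff p 1"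
  by (simp add: poly_0_coeff_0 coeff_Dqp qnum_def)

lemma poly_Dqp:
  assumes "q \<noteq> 1"
  shows "poly (Dqp q p) x = qD q (poly p) x"
proof (cases "x = 0")
  case True
  have "deriv (poly p) 0 = poly (pderiv p) 0" by (rule DERIV_imp_deriv) (rule poly_DERIV)
  also have "\<dots> = coeff p 1" by (simp add: poly_0_coeff_0 coeff_pderiv)
  finally show ?thesis using True assms by (simp add: qD_def poly_Dqp0)
next
  case False
  have d: "(1 - q) * x \<noteq> 0" using assms False by simp
  have "poly p x - poly p (q * x) = (\<Sum>i\<le>degree p. coeff p i * (x ^ i - (q*x)^i))"
    by (simp add: poly_altdef sum_subtractf[symmetric] algebra_simps)
  also have "\<dots> = (\<Sum>i<degree p. coeff p (Suc i) * (x ^ Suc i - (q*x)^ Suc i))"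
    by (subst sum.atMost_shift) simp
  also have "\<dots> = (\<Sum>i<degree p. ((1 - q) * x) * (coeff p (Suc i) * qnum q (Suc i) * x ^ i))"
    by (intro sum.cong refl) (use assms in \<open>simp add: qnum_def power_mult_distrib field_simps\<close>)
  also have "\<dots> = ((1 - q) * x) * poly (Dqp q p) x"
    by (simp add: Dqp_def poly_sum poly_monom sum_distrib_left)
  finally show ?thesis using False d by (simp add: qD_def)
qed

lemma qD_poly_eq: "q \<noteq> 1 \<Longrightarrow> qD q (poly p) = poly (Dqp q p)"
  by (rule ext) (simp add: poly_Dqp)

definition Lp :: "real \<Rightarrow> real poly \<Rightarrow> real poly \<Rightarrow> real poly \<Rightarrow> real poly" where
  "Lp q s t p = s * Dqp (1/q) (Dqp q p) + t * Dqp q p"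

lemma Lp_eq:
  assumes "0 < q" "q < 1"
  shows "poly s x * qD (1/q) (qD q (poly p)) x + poly t x * qD q (poly p) x = poly (Lp q s t p) x"
proof -
  have "1/q \<noteq> 1" using assms by (simp add: field_simps)
  thus ?thesis using assms by (simp add: qD_poly_eq Lp_def)
qed

lemma coeff_Lp:
  "coeff (Lp q [:s0,s1,s2:] [:t0,t1:] p) n =
     s0 * coeff p (n+2) * qnum q (n+2) * qnum (1/q) (n+1)
   + s1 * coeff p (n+1) * qnum q (n+1) * qnum (1/q) n
   + s2 * coeff p n * qnum q n * qnum (1/q) (n-1)
   + t0 * coeff p (n+1) * qnum q (n+1) + t1 * coeff p n * qnum q n"
proof (cases n)
  case 0 thus ?thesis by (simp add: Lp_def coeff_Dqp qnum_def)
next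
  case (Suc m)
  show ?thesis
  proof (cases m)
    case 0 thus ?thesis using Suc by (simp add: Lp_def coeff_Dqp qnum_def algebra_simps)
  next
    case (Suc k) thus ?thesis using \<open>n = Suc m\<close> by (simp add: Lp_def coeff_Dqp algebra_simps)
  qed
qed

lemma degree_Lp: "degree (Lp q [:s0,s1,s2:] [:t0,t1:] p) \<le> degree p"
proof (rule degree_le, intro allI impI)
  fix i assume "degree p < i"
  hence "coeff p i = 0" "coeff p (i+1) = 0" "coeff p (i+2) = 0" by (auto intro: coeff_eq_0)
  thus "coeff (Lp q [:s0,s1,s2:] [:t0,t1:] p) i = 0" by (simp add: coeff_Lp)
qed

lemma coeff_Lp_top:
  assumes "degree p \<le> n"
  shows "coeff (Lp q [:s0,s1,s2:] [:t0,t1:] p) n = coeff p n * qnum q n * (s2 * qnum (1/q) (n-1) + t1)"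
proof -
  have "coeff p (n+1) = 0" "coeff p (n+2) = 0" using assms by (auto intro: coeff_eq_0)
  thus ?thesis by (simp add: coeff_Lp algebra_simps)
qed



lemma qp_conv:
  assumes "0 \<le> q" "q < 1"
  shows "convergent_prod (\<lambda>k. 1 - \<alpha> * q ^ k :: real)"
proof -
  have "summable (\<lambda>k. norm ((1 - \<alpha> * q ^ k) - 1))"
    using assms by (simp add: abs_mult power_abs summable_geometric)
  thus ?thesis
    by (intro abs_convergent_prod_imp_convergent_prod summable_imp_abs_convergent_prod)
qed

lemma qp_rec:
  assumes "0 \<le> q" "q < 1" "\<alpha> \<noteq> 1"
  shows "qpoch_inf \<alpha> q = (1 - \<alpha>) * qpoch_inf (\<alpha> * q) q"
proof -
  have "(\<Prod>n. 1 - \<alpha> * q ^ Suc n) = qpoch_inf \<alpha> q / (1 - \<alpha>)"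
    using prodinf_split_head[OF qp_conv[OF assms(1,2)], of \<alpha>] assms
    by (simp add: qpoch_inf_def)
  moreover have "(\<Prod>n. 1 - \<alpha> * q ^ Suc n) = qpoch_inf (\<alpha> * q) q"
    unfolding qpoch_inf_def by (simp add: mult.assoc)
  ultimately show ?thesis using assms by (simp add: field_simps)
qed

lemma qp_factor_pos:
  fixes q \<alpha> :: real
  assumes "0 \<le> q" "q < 1" "\<alpha> < 1"
  shows "1 - \<alpha> * q ^ k > 0"
proof (cases "\<alpha> \<le> 0")
  case True
  have "\<alpha> * q ^ k \<le> 0" by (rule mult_nonpos_nonneg) (use True assms in auto)
  thus ?thesis by simp
next
  case False
  have "q ^ k \<le> 1" using assms by (simp add: power_le_one)
  hence "\<alpha> * q ^ k \<le> \<alpha>" using False by (simp add: mult_left_le)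
  thus ?thesis using assms by simp
qed

lemma qp_pos:
  assumes "0 \<le> q" "q < 1" "\<alpha> < 1"
  shows "qpoch_inf \<alpha> q > 0"
  unfolding qpoch_inf_def
  by (rule less_0_prodinf[OF qp_conv[OF assms(1,2)]]) (use qp_factor_pos[OF assms] in auto)

lemma qp_tail:
  assumes "0 \<le> q" "q < 1" "\<alpha> < 1"
  shows "(\<lambda>N. qpoch_inf (\<alpha> * q ^ N) q) \<longlonglongrightarrow> 1"
proof -
  define f where "f = (\<lambda>k. 1 - \<alpha> * q ^ k)"
  have cf: "convergent_prod f" unfolding f_def by (rule qp_conv[OF assms(1,2)])
  have nz: "f i \<noteq> 0" for i using qp_factor_pos[OF assms] unfolding f_def by (metis less_irrefl)
  have P: "prodinf f \<noteq> 0" using prodinf_nonzero[OF cf] nz by blast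
  have eq: "qpoch_inf (\<alpha> * q ^ N) q = prodinf f / (\<Prod>i<N. f i)" for N
  proof -
    have "qpoch_inf (\<alpha> * q ^ N) q = (\<Prod>i. f (i + N))"
      unfolding qpoch_inf_def f_def by (simp add: power_add mult_ac)
    also have "\<dots> = prodinf f / (\<Prod>i<N. f i)"
      by (rule prodinf_divide_initial_segment[OF cf]) (use nz in auto)
    finally show ?thesis .
  qed
  have "(\<lambda>n. \<Prod>i\<le>n. f i) \<longlonglongrightarrow> prodinf f" by (rule convergent_prod_LIMSEQ[OF cf])
  hence "(\<lambda>n. \<Prod>i<Suc n. f i) \<longlonglongrightarrow> prodinf f" by (simp add: lessThan_Suc_atMost)
  hence L: "(\<lambda>n. \<Prod>i<n. f i) \<longlonglongrightarrow> prodinf f" by (rule LIMSEQ_imp_Suc)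
  have "(\<lambda>N. prodinf f / (\<Prod>i<N. f i)) \<longlonglongrightarrow> prodinf f / prodinf f"
    by (intro tendsto_intros L P)
  thus ?thesis using P by (simp add: eq)
qed

lemma summable_geom_conv:
  fixes g :: "nat \<Rightarrow> real"
  assumes "0 \<le> q" "q < 1" "g \<longlonglongrightarrow> L"
  shows "summable (\<lambda>j. q ^ j * g j)"
proof -
  obtain K where K: "\<And>j. norm (g j) \<le> K" using convergent_imp_Bseq[of g] assms(3) by (auto simp: Bseq_def convergent_def)
  show ?thesis
  proof (rule summable_comparison_test[where g = "\<lambda>j. K * q ^ j"])
    show "\<exists>N. \<forall>n\<ge>N. norm (q ^ n * g n) \<le> K * q ^ n"
    proof (intro exI allI impI)
      fix n :: nat
      have "\<bar>g n\<bar> * q ^ n \<le> K * q ^ n" using K assms by (intro mult_right_mono) auto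
      thus "norm (q ^ n * g n) \<le> K * q ^ n" using assms by (simp add: abs_mult mult.commute)
    qed
    show "summable (\<lambda>j. K * q ^ j)" using assms by (intro summable_mult summable_geometric) simp
  qed
qed



locale qs =
  fixes q a b a2 b2 k1 k2 :: real and s1 t :: "real poly"
  assumes q0: "0 < q" and q1: "q < 1" and za: "a < 0" and zb: "0 < b"
    and zba2: "b < a2" and za2b2: "a2 \<le> b2"
    and s1f: "\<And>x. poly s1 x = k1 * (x - a) * (x - b)"
    and s2f: "\<And>x. poly (sigma2 q s1 t) x = k2 * (x - a2) * (x - b2)"
begin

definition rho :: "real \<Rightarrow> real" where
  "rho x = (qpoch_inf (q * x / a) q * qpoch_inf (q * x / b) q) /
           (qpoch_inf (x / a2) q * qpoch_inf (x / b2) q)"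

definition S :: "real \<Rightarrow> real poly \<Rightarrow> real" where
  "S c p = (\<Sum>j. q ^ j * (poly p (q ^ j * c) * rho (q ^ j * c)))"

definition Phi :: "real poly \<Rightarrow> real" where
  "Phi p = jackson_int q a b (\<lambda>x. poly p x * rho x)"

lemma Phi_S: "Phi p = (1 - q) * b * S b p + (1 - q) * (- a) * S a p"
  by (simp add: Phi_def S_def jackson_int_def)

lemma qx_in:
  assumes "a \<le> x" "x \<le> b"
  shows "a < q * x" "q * x < b"
proof -
  have "a < q * x \<and> q * x < b"
  proof (cases "x \<ge> 0")
    case True
    have "0 \<le> q * x" using True q0 by simp
    moreover have "q * x \<le> x" using True q1 q0 by (simp add: mult_left_le_one_le)
    moreover have "q * x < b"
    proof (cases "x = 0")
      case True thus ?thesis using zb by simp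
    next
      case False
      hence "q * x < 1 * x" using True q1 by (intro mult_strict_right_mono) auto
      thus ?thesis using assms by simp
    qed
    ultimately show ?thesis using za by linarith
  next
    case False
    have "0 < (q - 1) * x" using False q1 by (intro mult_neg_neg) auto
    hence "x < q * x" by (simp add: algebra_simps)
    moreover have "q * x < 0" using False q0 by (simp add: mult_pos_neg)
    ultimately show ?thesis using assms zb by linarith
  qed
  thus "a < q * x" "q * x < b" by auto
qed

lemma args:
  assumes "a \<le> x" "x \<le> b"
  shows "q * x / a < 1" "q * x / b < 1" "x / a2 < 1" "x / b2 < 1"
proof -
  show "q * x / a < 1" using qx_in[OF assms] za by (simp add: divide_less_eq)
  show "q * x / b < 1" using qx_in[OF assms] zb by (simp add: divide_less_eq)
  show "x / a2 < 1" using assms zba2 zb by (simp add: divide_less_eq)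
  show "x / b2 < 1" using assms zba2 za2b2 zb by (simp add: divide_less_eq)
qed

lemma pts_in: "c \<in> {a, b} \<Longrightarrow> a \<le> q ^ j * c \<and> q ^ j * c \<le> b"
proof (induction j)
  case 0 thus ?case using za zb by auto
next
  case (Suc j) thus ?case using qx_in[of "q ^ j * c"] by (simp add: mult.assoc less_imp_le)
qed

lemma rho_pos: "a \<le> x \<Longrightarrow> x \<le> b \<Longrightarrow> rho x > 0"
  unfolding rho_def using args[of x] q0 q1
  by (intro divide_pos_pos mult_pos_pos qp_pos) auto

lemma alg6:
  fixes A1 A2 B1 B2 u1 u2 v1 v2 :: real
  assumes "B1 \<noteq> 0" "B2 \<noteq> 0" "v1 \<noteq> 0" "v2 \<noteq> 0"
  shows "A1 * A2 / (B1 * B2) * u1 * u2 = (u1 * A1) * (u2 * A2) / ((v1 * B1) * (v2 * B2)) * v1 * v2"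
  using assms by (simp add: field_simps)

lemma rho_rec:
  assumes "a \<le> x" "x \<le> b"
  shows "rho (q * x) * (1 - q * x / a) * (1 - q * x / b) = rho x * (1 - x / a2) * (1 - x / b2)"
proof -
  have qx: "a \<le> q * x" "q * x \<le> b" using qx_in[OF assms] by auto
  note A = args[OF assms] and A' = args[OF qx]
  have gen: "qpoch_inf y q = (1 - y) * qpoch_inf (y * q) q" if "y < 1" for y
    using qp_rec[of q y] that q0 q1 by simp
  have e1: "qpoch_inf (q * x / a) q = (1 - q * x / a) * qpoch_inf (q * (q * x) / a) q"
    using gen[of "q * x / a"] A by (simp add: mult_ac)
  have e2: "qpoch_inf (q * x / b) q = (1 - q * x / b) * qpoch_inf (q * (q * x) / b) q"
    using gen[of "q * x / b"] A by (simp add: mult_ac)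
  have e3: "qpoch_inf (x / a2) q = (1 - x / a2) * qpoch_inf (q * x / a2) q"
    using gen[of "x / a2"] A by (simp add: mult_ac)
  have e4: "qpoch_inf (x / b2) q = (1 - x / b2) * qpoch_inf (q * x / b2) q"
    using gen[of "x / b2"] A by (simp add: mult_ac)
  have p1: "qpoch_inf (q * x / a2) q > 0" "qpoch_inf (q * x / b2) q > 0"
    using A' q0 q1 by (auto intro: qp_pos)
  have p2: "1 - x / a2 > 0" "1 - x / b2 > 0" using A by auto
  show ?thesis unfolding rho_def e1 e2 e3 e4 using p1 p2 by (intro alg6) auto
qed

lemma rho_lim:
  assumes "c \<in> {a, b}"
  shows "(\<lambda>j. rho (q ^ j * c)) \<longlonglongrightarrow> 1"
proof -
  have cab: "a \<le> c" "c \<le> b" using assms za zb by auto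
  note A = args[OF cab]
  have e: "rho (q ^ j * c) = qpoch_inf ((q * c / a) * q ^ j) q * qpoch_inf ((q * c / b) * q ^ j) q /
      (qpoch_inf ((c / a2) * q ^ j) q * qpoch_inf ((c / b2) * q ^ j) q)" for j
    unfolding rho_def by (simp add: mult_ac)
  have "(\<lambda>j. qpoch_inf ((q * c / a) * q ^ j) q * qpoch_inf ((q * c / b) * q ^ j) q /
      (qpoch_inf ((c / a2) * q ^ j) q * qpoch_inf ((c / b2) * q ^ j) q)) \<longlonglongrightarrow> 1 * 1 / (1 * 1)"
    using A q0 q1 by (intro tendsto_intros qp_tail) auto
  thus ?thesis by (simp add: e)
qed

lemma poly_lim: "(\<lambda>j. poly p (q ^ j * c)) \<longlonglongrightarrow> poly p 0"
proof -
  have "(\<lambda>j. q ^ j * c) \<longlonglongrightarrow> 0 * c"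
    using q0 q1 by (intro tendsto_intros LIMSEQ_power_zero) auto
  thus ?thesis by (intro isCont_tendsto_compose[OF poly_isCont]) simp
qed

lemma summ: "c \<in> {a, b} \<Longrightarrow> summable (\<lambda>j. q ^ j * (poly p (q ^ j * c) * rho (q ^ j * c)))"
  using q0 q1 by (intro summable_geom_conv[OF _ _ tendsto_mult[OF poly_lim rho_lim]]) auto

lemma S_add: "c \<in> {a, b} \<Longrightarrow> S c (p + r) = S c p + S c r"
  unfolding S_def using suminf_add[OF summ[of c p] summ[of c r]]
  by (simp add: algebra_simps)

lemma S_smult: "c \<in> {a, b} \<Longrightarrow> S c (smult k p) = k * S c p"
  unfolding S_def by (subst suminf_mult[OF summ, symmetric]) (simp_all add: mult_ac)

lemma Phi_add: "Phi (p + r) = Phi p + Phi r"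
  by (simp add: Phi_S S_add algebra_simps)

lemma Phi_smult: "Phi (smult k p) = k * Phi p"
  by (simp add: Phi_S S_smult algebra_simps)

lemma Phi_pos:
  assumes "p \<noteq> 0"
  shows "Phi (p * p) > 0"
proof -
  have nn: "c \<in> {a, b} \<Longrightarrow> 0 \<le> q ^ j * (poly (p * p) (q ^ j * c) * rho (q ^ j * c))" for c j
    using rho_pos[of "q ^ j * c"] pts_in[of c j] q0 by (auto intro!: mult_nonneg_nonneg less_imp_le)
  have "\<exists>j. poly p (q ^ j * b) \<noteq> 0"
  proof (rule ccontr)
    assume "\<not> ?thesis"
    hence "range (\<lambda>j. q ^ j * b) \<subseteq> {x. poly p x = 0}" by auto
    hence fin: "finite (range (\<lambda>j. q ^ j * b))" using poly_roots_finite[OF assms] finite_subset by blast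
    have "inj (\<lambda>j::nat. q ^ j * b)"
      using q0 q1 zb by (intro injI) (simp add: power_inject_exp')
    thus False using fin finite_imageD by (metis infinite_UNIV_nat)
  qed
  then obtain j where j: "poly p (q ^ j * b) \<noteq> 0" by blast
  have sq: "0 < poly (p * p) (q ^ j * b)" by (metis j poly_mult power2_eq_square zero_less_power2)
  have "0 < q ^ j * (poly (p * p) (q ^ j * b) * rho (q ^ j * b))"
    using sq rho_pos[of "q ^ j * b"] pts_in[of b j] q0 by (auto intro!: mult_pos_pos)
  hence Sb: "S b (p * p) > 0" unfolding S_def
    using nn[of b] summ[of b "p * p"] suminf_pos_iff by blast
  have Sa: "S a (p * p) \<ge> 0" unfolding S_def
    using nn[of a] summ[of a "p * p"] by (intro suminf_nonneg) auto
  have "(1 - q) * b * S b (p * p) > 0" using Sb q1 zb by simp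
  moreover have "(1 - q) * (- a) * S a (p * p) \<ge> 0" using Sa q1 za by (intro mult_nonneg_nonneg) auto
  ultimately show ?thesis by (simp add: Phi_S)
qed

end


lemma alg_L:
  fixes q m x S1 T Y0 Yq Yp :: real
  assumes "q \<noteq> 0" "x \<noteq> 0" "m \<noteq> 0"
  shows "m^2 * x^2 * (S1 * (- q * ((Y0 - Yq) / (m * x) - (Yp - Y0) / (m * (x / q))) / (m * x)) + T * ((Y0 - Yq) / (m * x)))
     = (q * S1 - m * x * T) * (Yq - Y0) + q^2 * S1 * (Yp - Y0)"
  using assms by (simp add: field_simps power2_eq_square)

lemma alg_split:
  fixes x m LY LZ Y Z Yq Zq Yp Zp H A B r :: real
  assumes "x \<noteq> 0" "m \<noteq> 0"
    and "m * x^2 * LY = A * (Yq - Y) + B * (Yp - Y)"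
    and "m * x^2 * LZ = A * (Zq - Z) + B * (Zp - Z)"
    and "x * H = Yq * Z - Zq * Y"
  shows "x * (LY * Z * r - LZ * Y * r) =
     r * A * H / m + r * B * (Yp * Z - Zp * Y) / (m * x)"
proof -
  have k: "m * x^2 \<noteq> 0" using assms by simp
  have LY: "LY = (A * (Yq - Y) + B * (Yp - Y)) / (m * x^2)" using assms(3) k by (simp add: field_simps)
  have LZ: "LZ = (A * (Zq - Z) + B * (Zp - Z)) / (m * x^2)" using assms(4) k by (simp add: field_simps)
  have H: "H = (Yq * Z - Zq * Y) / x" using assms(1,5) by (simp add: field_simps)
  show ?thesis unfolding LY LZ H using assms(1,2)
    by (simp add: field_simps power2_eq_square)
qed

context qs begin

abbreviation sig2 where "sig2 x \<equiv> poly (sigma2 q s1 t) x"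

lemma Ldiff:
  assumes "x \<noteq> 0"
  shows "(1 - q)^2 * x^2 * poly (Lp q s1 t y) x =
     sig2 x * (poly y (q * x) - poly y x) + q^2 * poly s1 x * (poly y (x / q) - poly y x)"
proof -
  define m where "m = 1 - q"
  have qn: "q \<noteq> 0" "m \<noteq> 0" using q0 q1 by (auto simp: m_def)
  have L: "poly (Lp q s1 t y) x = poly s1 x * qD (1/q) (qD q (poly y)) x + poly t x * qD q (poly y) x"
    using Lp_eq[OF q0 q1] by simp
  have d1: "qD q (poly y) x = (poly y x - poly y (q*x)) / (m * x)"
    using assms by (simp add: qD_def m_def)
  have d2: "qD q (poly y) (x / q) = (poly y (x / q) - poly y x) / (m * (x / q))"
    using assms qn by (simp add: qD_def m_def)
  have gen: "qD (1/q) F x = - q * (F x - F (x / q)) / (m * x)" for F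
  proof -
    have "qD (1/q) F x = (F x - F (x / q)) / ((1 - 1/q) * x)"
      using assms by (simp add: qD_def)
    also have "(1 - 1/q) * x = - (m * x) / q" using qn by (simp add: m_def field_simps)
    finally show ?thesis using qn by simp
  qed
  have d3: "qD (1/q) (qD q (poly y)) x = - q * (qD q (poly y) x - qD q (poly y) (x / q)) / (m * x)"
    by (rule gen)
  have s2: "sig2 x = q * poly s1 x - m * x * poly t x"
    using qn by (simp add: sigma2_def m_def field_simps)
  show ?thesis unfolding L d3 d1 d2 s2 m_def[symmetric] using alg_L[OF qn(1) assms qn(2)] by simp
qed

lemma pearson:
  assumes "a \<le> x" "x \<le> b"
  shows "q * poly s1 (q * x) * rho (q * x) = sig2 x * rho x"
proof -
  have "sig2 0 = q * poly s1 0" by (simp add: sigma2_def)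
  hence k: "k2 * a2 * b2 = q * (k1 * a * b)" using s1f[of 0] s2f[of 0] by simp
  have a0: "a \<noteq> 0" "b \<noteq> 0" "a2 \<noteq> 0" "b2 \<noteq> 0" using za zb zba2 za2b2 by auto
  have e1: "poly s1 (q * x) = k1 * a * b * ((1 - q * x / a) * (1 - q * x / b))"
    using a0 by (simp add: s1f field_simps)
  have e2: "sig2 x = k2 * a2 * b2 * ((1 - x / a2) * (1 - x / b2))"
    using a0 by (simp add: s2f field_simps)
  have "q * poly s1 (q * x) * rho (q * x) = q * (k1 * a * b) * (rho (q * x) * (1 - q * x / a) * (1 - q * x / b))"
    by (simp add: e1 mult_ac)
  also have "\<dots> = k2 * a2 * b2 * (rho x * (1 - x / a2) * (1 - x / b2))"
    by (simp only: rho_rec[OF assms] k)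
  also have "\<dots> = sig2 x * rho x" by (simp add: e2 mult_ac)
  finally show ?thesis .
qed

end


lemma alg_DS:
  fixes q m u r s Yu Zu Yv Zv :: real
  assumes "q \<noteq> 0" "m \<noteq> 0" "u \<noteq> 0"
  shows "r * (q^2 * s) * (Yu * Zv - Zu * Yv) / (m * (q * u)) = (q * s * r) * (-(Yv * Zu - Zv * Yu)) / (m * u)"
  using assms by (simp add: field_simps power2_eq_square)

lemma alg_W:
  fixes m u A B C :: real
  assumes "m \<noteq> 0" "u \<noteq> 0"
  shows "(A * B) * (-(u * C)) / (m * u) = - (B * A * C / m)"
  using assms by (simp add: field_simps)

context qs begin

lemma branch:
  assumes c: "c \<in> {a, b}"
    and hh: "\<And>x. x * poly h x = poly y (q * x) * poly z x - poly z (q * x) * poly y x"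
  shows "(\<lambda>j. (q ^ j * c) * (poly (Lp q s1 t y) (q ^ j * c) * poly z (q ^ j * c) * rho (q ^ j * c)
             - poly (Lp q s1 t z) (q ^ j * c) * poly y (q ^ j * c) * rho (q ^ j * c)))
     sums (sig2 0 * poly h 0 / (1 - q)^2)"
proof -
  define X where "X j = q ^ j * c" for j
  define W where "W N = rho (X N) * sig2 (X N) * poly h (X N) / (1 - q)^2" for N
  define D where "D j = X j * (poly (Lp q s1 t y) (X j) * poly z (X j) * rho (X j)
             - poly (Lp q s1 t z) (X j) * poly y (X j) * rho (X j))" for j
  have cnz: "c \<noteq> 0" using c za zb by auto
  have Xnz: "X j \<noteq> 0" for j using cnz q0 by (simp add: X_def)
  have Xin: "a \<le> X j" "X j \<le> b" for j using pts_in[OF c] by (auto simp: X_def)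
  have XS: "X (Suc j) = q * X j" for j by (simp add: X_def)
  have XS': "X (Suc j) / q = X j" for j using q0 by (simp add: X_def)
  have s1c: "poly s1 c = 0" using c by (auto simp: s1f)
  have m: "(1 - q)^2 \<noteq> 0" using q1 by simp
  have split: "D j = rho (X j) * sig2 (X j) * poly h (X j) / (1 - q)^2
      + rho (X j) * (q^2 * poly s1 (X j)) * (poly y (X j / q) * poly z (X j) - poly z (X j / q) * poly y (X j))
        / ((1 - q)^2 * X j)" for j
    unfolding D_def
    by (rule alg_split[OF Xnz m Ldiff[OF Xnz] Ldiff[OF Xnz] hh])
  have D0: "D 0 = W 0"
    using split[of 0] s1c by (simp add: W_def X_def)
  have DS: "D (Suc j) = W (Suc j) - W j" for j
  proof -
    have P: "q * poly s1 (X (Suc j)) * rho (X (Suc j)) = sig2 (X j) * rho (X j)"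
      using pearson[OF Xin(1)[of j] Xin(2)[of j]] by (simp add: XS)
    have H: "X j * poly h (X j) = poly y (X (Suc j)) * poly z (X j) - poly z (X (Suc j)) * poly y (X j)"
      using hh[of "X j"] by (simp add: XS)
    have "rho (X (Suc j)) * (q^2 * poly s1 (X (Suc j))) * (poly y (X (Suc j) / q) * poly z (X (Suc j)) - poly z (X (Suc j) / q) * poly y (X (Suc j)))
        / ((1 - q)^2 * X (Suc j))
       = (q * poly s1 (X (Suc j)) * rho (X (Suc j))) * (- (X j * poly h (X j))) / ((1 - q)^2 * X j)"
      unfolding XS' unfolding H XS by (rule alg_DS) (use q0 Xnz[of j] m in auto)
    also have "\<dots> = - W j" unfolding P W_def by (rule alg_W) (use Xnz[of j] m in auto)
    finally show ?thesis using split[of "Suc j"] by (simp add: W_def)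
  qed
  have part: "(\<Sum>j<Suc N. D j) = W N" for N
    by (induction N) (simp_all add: D0 DS)
  have "(\<lambda>N. W N) \<longlonglongrightarrow> 1 * sig2 0 * poly h 0 / (1 - q)^2"
    unfolding W_def X_def by (intro tendsto_divide tendsto_const tendsto_mult rho_lim[OF c] poly_lim) (use q1 in simp)
  hence "(\<lambda>N. \<Sum>j<Suc N. D j) \<longlonglongrightarrow> sig2 0 * poly h 0 / (1 - q)^2" by (simp only: part mult_1)
  hence "D sums (sig2 0 * poly h 0 / (1 - q)^2)"
    unfolding sums_def by (rule LIMSEQ_imp_Suc)
  thus ?thesis unfolding D_def[abs_def] X_def[abs_def] .
qed

lemma symm: "Phi (Lp q s1 t y * z) = Phi (y * Lp q s1 t z)"
proof -
  define hp where "hp = pcompose y [:0, q:] * z - pcompose z [:0, q:] * y"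
  have "poly hp 0 = 0" by (simp add: hp_def poly_pcompose)
  hence "[:- 0, 1:] dvd hp" using poly_eq_0_iff_dvd by blast
  then obtain h where hd: "hp = [:- 0, 1:] * h" unfolding dvd_def by blast
  have hh: "x * poly h x = poly y (q * x) * poly z x - poly z (q * x) * poly y x" for x
  proof -
    have "poly hp x = x * poly h x" by (simp add: hd)
    moreover have "poly hp x = poly y (q * x) * poly z x - poly z (q * x) * poly y x"
      by (simp add: hp_def poly_pcompose mult.commute)
    ultimately show ?thesis by simp
  qed
  have key: "c * (S c (Lp q s1 t y * z) - S c (y * Lp q s1 t z)) = sig2 0 * poly h 0 / (1 - q)^2"
    if c: "c \<in> {a, b}" for c
  proof -
    have "c * (S c (Lp q s1 t y * z) - S c (y * Lp q s1 t z))
       = (\<Sum>j. c * (q ^ j * (poly (Lp q s1 t y * z) (q ^ j * c) * rho (q ^ j * c)) -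
                     q ^ j * (poly (y * Lp q s1 t z) (q ^ j * c) * rho (q ^ j * c))))"
      unfolding S_def
      by (subst suminf_diff[OF summ[OF c] summ[OF c]]) (subst suminf_mult[symmetric], intro summable_diff summ c, rule refl)
    also have "(\<lambda>j. c * (q ^ j * (poly (Lp q s1 t y * z) (q ^ j * c) * rho (q ^ j * c)) -
                     q ^ j * (poly (y * Lp q s1 t z) (q ^ j * c) * rho (q ^ j * c)))) =
       (\<lambda>j. (q ^ j * c) * (poly (Lp q s1 t y) (q ^ j * c) * poly z (q ^ j * c) * rho (q ^ j * c)
             - poly (Lp q s1 t z) (q ^ j * c) * poly y (q ^ j * c) * rho (q ^ j * c)))"
      by (rule ext) (simp add: algebra_simps)
    also have "suminf \<dots> = sig2 0 * poly h 0 / (1 - q)^2"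
      by (rule sums_unique[OF branch[OF c hh], symmetric])
    finally show ?thesis .
  qed
  have "Phi (Lp q s1 t y * z) - Phi (y * Lp q s1 t z) =
     (1 - q) * (b * (S b (Lp q s1 t y * z) - S b (y * Lp q s1 t z)) - a * (S a (Lp q s1 t y * z) - S a (y * Lp q s1 t z)))"
    unfolding Phi_S by (simp add: algebra_simps)
  also have "\<dots> = 0" using key[of a] key[of b] by simp
  finally show ?thesis by simp
qed

end


context qs begin

lemma Phi_zero: "Phi 0 = 0"
  using Phi_smult[of 0 0] by simp

lemma Phi_diff: "Phi (p - r) = Phi p - Phi r"
  using Phi_add[of "p - r" r] by simp

lemma Phi_sum: "finite A \<Longrightarrow> Phi (\<Sum>i\<in>A. f i) = (\<Sum>i\<in>A. Phi (f i))"
  by (induction A rule: finite_induct) (simp_all add: Phi_zero Phi_add)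

lemma orth_lower:
  assumes P: "\<And>i. i < n \<Longrightarrow> degree (P i) = i \<and> coeff (P i) i = 1"
    and O: "\<And>i. i < n \<Longrightarrow> Phi (p * P i) = 0"
  shows "degree r < n \<Longrightarrow> Phi (p * r) = 0"
proof -
  have "\<forall>r. degree r \<le> d \<longrightarrow> d < n \<longrightarrow> Phi (p * r) = 0" for d
  proof (induction d)
    case 0
    show ?case
    proof (intro allI impI)
      fix r :: "real poly" assume r: "degree r \<le> 0" and n: "0 < n"
      have "r = smult (coeff r 0) (P 0)"
      proof (rule poly_eqI)
        fix i
        show "coeff r i = coeff (smult (coeff r 0) (P 0)) i"
        proof (cases i)
          case 0 thus ?thesis using P[OF n] by simp
        next
          case (Suc k)
          hence "coeff r i = 0" "coeff (P 0) i = 0" using r P[OF n] by (auto intro: coeff_eq_0)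
          thus ?thesis by simp
        qed
      qed
      hence "Phi (p * r) = coeff r 0 * Phi (p * P 0)" by (metis Phi_smult mult_smult_right)
      thus "Phi (p * r) = 0" using O[OF n] by simp
    qed
  next
    case (Suc d)
    show ?case
    proof (intro allI impI)
      fix r :: "real poly" assume r: "degree r \<le> Suc d" and n: "Suc d < n"
      define r' where "r' = r - smult (coeff r (Suc d)) (P (Suc d))"
      have "degree r' \<le> d"
      proof (rule degree_le, intro allI impI)
        fix i assume i: "d < i"
        show "coeff r' i = 0"
        proof (cases "i = Suc d")
          case True thus ?thesis using P[OF n] by (simp add: r'_def)
        next
          case False
          hence "Suc d < i" using i by simp
          hence "coeff r i = 0" "coeff (P (Suc d)) i = 0" using r P[OF n] by (auto intro: coeff_eq_0)
          thus ?thesis by (simp add: r'_def)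
        qed
      qed
      hence "Phi (p * r') = 0" using Suc.IH n by simp
      moreover have "p * r = p * r' + smult (coeff r (Suc d)) (p * P (Suc d))"
        by (simp add: r'_def algebra_simps mult_smult_right)
      ultimately show "Phi (p * r) = 0" using O[OF n] by (simp add: Phi_add Phi_smult)
    qed
  qed
  thus "degree r < n \<Longrightarrow> Phi (p * r) = 0" by (metis order_refl)
qed

lemma gs_exists:
  "\<exists>P. (\<forall>i<n. degree (P i) = i \<and> coeff (P i) i = 1) \<and> (\<forall>i<n. \<forall>j<n. i \<noteq> j \<longrightarrow> Phi (P i * P j) = 0)"
proof (induction n)
  case 0 show ?case by simp
next
  case (Suc n)
  then obtain P where P1: "\<And>i. i < n \<Longrightarrow> degree (P i) = i \<and> coeff (P i) i = 1"
    and P2: "\<And>i j. i < n \<Longrightarrow> j < n \<Longrightarrow> i \<noteq> j \<Longrightarrow> Phi (P i * P j) = 0" by blast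
  define c where "c k = Phi (monom 1 n * P k) / Phi (P k * P k)" for k
  define v where "v = monom 1 n - (\<Sum>k<n. smult (c k) (P k))"
  have cs: "coeff (\<Sum>k<n. smult (c k) (P k)) i = 0" if "n \<le> i" for i
  proof -
    have "coeff (P k) i = 0" if "k < n" for k using P1[OF that] \<open>n \<le> i\<close> that by (intro coeff_eq_0) auto
    thus ?thesis by (simp add: coeff_sum)
  qed
  have vn: "coeff v n = 1" using cs[of n] by (simp add: v_def)
  have vi: "coeff v i = 0" if "n < i" for i using cs[of i] that by (simp add: v_def coeff_monom)
  have dv: "degree v = n"
    using vn vi by (intro antisym degree_le le_degree) auto
  have Pnz: "P k \<noteq> 0" if "k < n" for k using P1[OF that] by auto
  have ov: "Phi (v * P j) = 0" if j: "j < n" for j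
  proof -
    have "(\<Sum>k<n. smult (c k) (P k)) * P j = (\<Sum>k<n. smult (c k) (P k * P j))"
      by (simp add: sum_distrib_right mult_smult_left)
    hence "v * P j = monom 1 n * P j - (\<Sum>k<n. smult (c k) (P k * P j))"
      by (simp add: v_def left_diff_distrib)
    hence "Phi (v * P j) = Phi (monom 1 n * P j) - (\<Sum>k<n. c k * Phi (P k * P j))"
      by (simp add: Phi_diff Phi_sum Phi_smult)
    also have "(\<Sum>k<n. c k * Phi (P k * P j)) = (\<Sum>k<n. if k = j then c j * Phi (P j * P j) else 0)"
      by (intro sum.cong refl) (use P2 j in auto)
    also have "\<dots> = c j * Phi (P j * P j)" using j by simp
    also have "\<dots> = Phi (monom 1 n * P j)"
      using Phi_pos[OF Pnz[OF j]] by (simp add: c_def)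
    finally show ?thesis by simp
  qed
  define P' where "P' = P(n := v)"
  have "\<forall>i<Suc n. degree (P' i) = i \<and> coeff (P' i) i = 1"
    using P1 dv vn by (auto simp: P'_def less_Suc_eq)
  moreover have "\<forall>i<Suc n. \<forall>j<Suc n. i \<noteq> j \<longrightarrow> Phi (P' i * P' j) = 0"
    using P2 ov by (auto simp: P'_def less_Suc_eq mult.commute)
  ultimately show ?case by blast
qed

lemma ortho_exists: "\<exists>p. degree p = n \<and> coeff p n = 1 \<and> (\<forall>r. degree r < n \<longrightarrow> Phi (p * r) = 0)"
proof -
  obtain P where P1: "\<forall>i<Suc n. degree (P i) = i \<and> coeff (P i) i = 1"
    and P2: "\<forall>i<Suc n. \<forall>j<Suc n. i \<noteq> j \<longrightarrow> Phi (P i * P j) = 0" using gs_exists by blast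
  have "\<forall>r. degree r < n \<longrightarrow> Phi (P n * r) = 0"
    using orth_lower[of n P "P n"] P1 P2 by auto
  thus ?thesis using P1 by blast
qed

end


context qs begin

lemma main_qs:
  assumes ds: "degree s1 \<le> 2" and dt: "degree t \<le> 1"
  shows "\<exists>P :: nat \<Rightarrow> real poly. \<exists>d :: nat \<Rightarrow> real.
     (\<forall>n. degree (P n) = n \<and> solves_qEHT q s1 t (qEHT_lambda q s1 t n) (poly (P n)) \<and> d n \<noteq> 0) \<and>
     (\<forall>m n. Phi (P n * P m) = (if m = n then d n else 0))"
proof -
  define c0 c1 c2 e0 e1 where "c0 = coeff s1 0" "c1 = coeff s1 1" "c2 = coeff s1 2"
    "e0 = coeff t 0" "e1 = coeff t 1"
  have s1e: "s1 = [:c0, c1, c2:]"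
  proof (rule poly_eqI)
    fix i show "coeff s1 i = coeff [:c0, c1, c2:] i"
      using ds by (cases i; cases "i - 1"; cases "i - 2") (auto simp: c0_c1_c2_e0_e1_def coeff_eq_0 numeral_2_eq_2)
  qed
  have te: "t = [:e0, e1:]"
  proof (rule poly_eqI)
    fix i show "coeff t i = coeff [:e0, e1:] i"
      using dt by (cases i; cases "i - 1") (auto simp: c0_c1_c2_e0_e1_def coeff_eq_0)
  qed
  have lam: "qEHT_lambda q s1 t n = - qnum q n * (e1 + qnum (1/q) (n - 1) * c2)" for n
    by (simp add: qEHT_lambda_def dd0_def s1e te pderiv_pCons)
  define P where "P n = (SOME p. degree p = n \<and> coeff p n = 1 \<and> (\<forall>r. degree r < n \<longrightarrow> Phi (p * r) = 0))" for n
  have P: "degree (P n) = n \<and> coeff (P n) n = 1 \<and> (\<forall>r. degree r < n \<longrightarrow> Phi (P n * r) = 0)" for n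
    unfolding P_def by (rule someI_ex) (rule ortho_exists)
  have dL: "degree (Lp q s1 t p) \<le> degree p" for p
    unfolding s1e te by (rule degree_Lp)
  have eig: "Lp q s1 t (P n) + smult (qEHT_lambda q s1 t n) (P n) = 0" for n
  proof (rule ccontr)
    define s where "s = Lp q s1 t (P n) + smult (qEHT_lambda q s1 t n) (P n)"
    assume "\<not> (Lp q s1 t (P n) + smult (qEHT_lambda q s1 t n) (P n) = 0)"
    hence "s \<noteq> 0" by (simp add: s_def)
    have ds: "degree s \<le> n" unfolding s_def
      using dL[of "P n"] P[of n] by (intro degree_add_le) auto
    have cn: "coeff s n = 0"
      using coeff_Lp_top[of "P n" n q c0 c1 c2 e0 e1] P[of n]
      by (simp add: s_def s1e[symmetric] te[symmetric] lam algebra_simps)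
    have "degree s \<noteq> n" using cn \<open>s \<noteq> 0\<close> by (metis leading_coeff_0_iff)
    hence dsn: "degree s < n" using ds by simp
    have "Phi (s * r) = 0" if r: "degree r < n" for r
    proof -
      have "s * r = Lp q s1 t (P n) * r + smult (qEHT_lambda q s1 t n) (P n * r)"
        by (simp add: s_def algebra_simps mult_smult_left)
      hence "Phi (s * r) = Phi (P n * Lp q s1 t r) + qEHT_lambda q s1 t n * Phi (P n * r)"
        by (simp add: Phi_add Phi_smult symm)
      moreover have "Phi (P n * Lp q s1 t r) = 0" using P[of n] dL[of r] r by auto
      moreover have "Phi (P n * r) = 0" using P[of n] r by auto
      ultimately show ?thesis by simp
    qed
    hence "Phi (s * s) = 0" using dsn by blast
    thus False using Phi_pos[OF \<open>s \<noteq> 0\<close>] by simp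
  qed
  have solves: "solves_qEHT q s1 t (qEHT_lambda q s1 t n) (poly (P n))" for n
    unfolding solves_qEHT_def
  proof
    fix x
    have "poly s1 x * qD (1 / q) (qD q (poly (P n))) x + poly t x * qD q (poly (P n)) x
       + qEHT_lambda q s1 t n * poly (P n) x
       = poly (Lp q s1 t (P n) + smult (qEHT_lambda q s1 t n) (P n)) x"
      by (simp add: Lp_eq[OF q0 q1])
    thus "poly s1 x * qD (1 / q) (qD q (poly (P n))) x + poly t x * qD q (poly (P n)) x
       + qEHT_lambda q s1 t n * poly (P n) x = 0" by (simp add: eig)
  qed
  define d where "d n = Phi (P n * P n)" for n
  have dnz: "d n \<noteq> 0" for n
  proof -
    have "P n \<noteq> 0" using P[of n] by auto
    thus ?thesis using Phi_pos by (simp add: d_def less_imp_neq[symmetric])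
  qed
  have orth: "Phi (P n * P m) = (if m = n then d n else 0)" for m n
  proof (cases "m = n")
    case True thus ?thesis by (simp add: d_def)
  next
    case False
    show ?thesis
    proof (cases "m < n")
      case True thus ?thesis using P[of n] P[of m] False by simp
    next
      case False
      hence "n < m" using \<open>m \<noteq> n\<close> by simp
      hence "Phi (P m * P n) = 0" using P[of m] P[of n] by simp
      thus ?thesis using \<open>m \<noteq> n\<close> by (simp add: mult.commute)
    qed
  qed
  show ?thesis using P solves dnz orth by blast
qed

end

theorem theorem4p5:
  fixes q :: real and \<sigma>1 \<tau> :: "real poly" and a1 b1 a2 b2 :: real
  assumes q: "0 < q" "q < 1"
    and deg\<sigma>1: "degree \<sigma>1 \<le> 2"
    and deg\<tau>: "degree \<tau> \<le> 1"
    and \<tau>1: "poly (pderiv \<tau>) 0 \<noteq> 0"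
    and s1nz: "dd0 \<sigma>1 \<noteq> 0"
    and s2nz: "dd0 (sigma2 q \<sigma>1 \<tau>) \<noteq> 0"
    and \<sigma>1_fact: "\<forall>x. poly \<sigma>1 x = (1/2) * dd0 \<sigma>1 * (x - a1) * (x - b1)"
    and \<sigma>2_fact: "\<forall>x. poly (sigma2 q \<sigma>1 \<tau>) x = (1/2) * dd0 (sigma2 q \<sigma>1 \<tau>) * (x - a2) * (x - b2)"
    and zeros: "a1 < 0" "0 < b1" "b1 < a2" "a2 \<le> b2"
    and Lambda: "q^2 * (q powi (-2) * (1 + (1 - 1/q) * poly (pderiv \<tau>) 0 / ((1/2) * dd0 \<sigma>1))) < 0"
  shows "\<exists>P :: nat \<Rightarrow> real poly. \<exists>d :: nat \<Rightarrow> real.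
     (\<forall>n. degree (P n) = n \<and> solves_qEHT q \<sigma>1 \<tau> (qEHT_lambda q \<sigma>1 \<tau> n) (poly (P n)) \<and> d n \<noteq> 0) \<and>
     (\<forall>m n. jackson_int q a1 b1
        (\<lambda>x. poly (P n) x * poly (P m) x *
              ((qpoch_inf (q * x / a1) q * qpoch_inf (q * x / b1) q) /
               (qpoch_inf (x / a2) q * qpoch_inf (x / b2) q)))
        = (if m = n then d n else 0))"
proof -
  interpret qs q a1 b1 a2 b2 "(1/2) * dd0 \<sigma>1" "(1/2) * dd0 (sigma2 q \<sigma>1 \<tau>)" \<sigma>1 \<tau>
    using q zeros \<sigma>1_fact \<sigma>2_fact by unfold_locales auto
  have eq: "jackson_int q a1 b1
        (\<lambda>x. poly (P n) x * poly (P m) x *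
              ((qpoch_inf (q * x / a1) q * qpoch_inf (q * x / b1) q) /
               (qpoch_inf (x / a2) q * qpoch_inf (x / b2) q))) = Phi (P n * P m)" for P :: "nat \<Rightarrow> real poly" and m n
    by (simp add: Phi_def rho_def)
  show ?thesis unfolding eq using main_qs[OF deg\<sigma>1 deg\<tau>] by blast
qed


end
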